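(* Let $\lambda$ be a partition and $\alpha=(\alpha_1,\dots,\alpha_n)$ a weak composition. The map $\rho^{\uparrow}_N:=\rho_N\circ\mathrm{rot}^2$ is a bijection from $\mathrm{MLQ}_0(\lambda,\alpha)$ to $\mathrm{MLQ}_0(\lambda,\mathrm{rev}(\alpha))$, where $\mathrm{rev}(\alpha)=(\alpha_n,\dots,\alpha_1)$.
   Context: For a partition $\lambda$ with $L=\lambda_1$ ($\lambda'$ the conjugate), a multiline queue of shape $\lambda$ on $n$ columns is a tuple $M=(B_1,\dots,B_L)$ of subsets of $[n]$ with $|B_j|=\lambda'_j$, drawn as an $L\times n$ grid, rows $1..L$ bottom to top, columns $1..n$ left to right, ball in $(r,j)$ iff $j\in B_r$. $\mathrm{MLQ}_0(\lambda,\alpha)$ is the set of such $M$ that are nonwrapping (see below) and have exactly $\alpha_j$ balls in column $j$ for each $j$. $\mathrm{rot}^2$ rotates the grid by $180^\circ$: the ball in cell $(r,c)$ goes to cell $(L+1-r,n+1-c)$. Tuples with empty top rows are identified with the tuple obtained by deleting them. $\mathrm{cw}(B)$ scans columns left to right, each top to bottom, recording row numbers. Nonwrapping: for $r=L,\dots,2$, unlabelled balls of row $r$ get label $r$; balls of row $r$ in decreasing label order (left to right among ties) are each paired with the first unlabelled ball of row $r-1$ weakly to the right cyclically modulo $n$, which gets the same label; a pairing wraps if the lower ball is strictly left of the upper one. $\operatorname{maj}(M)=\sum(\ell(p)-r(p)+1)$ over wrapping pairings ($r(p)$ upper row, $\ell(p)$ label); nonwrapping means $\operatorname{maj}(M)=0$.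 Collapsing of any tuple $B=(B_1,\dots,B_L)$ of subsets of $[n]$: $\mathrm{Par}_i(w)$ writes "(" for each letter $i+1$ and ")" for each letter $i$ of $w$ and iteratively matches a "(" with a ")" to its right when adjacent or separated only by matched parentheses; $e_i^\star(B)$ moves every ball of row $i+1$ whose letter in $\mathrm{cw}(B)$ is unmatched in $\mathrm{Par}_i(\mathrm{cw}(B))$ down to row $i$ in the same column; $e^\star_{[a,b]}=e^\star_ae^\star_{a+1}\cdots e^\star_b$ (acting right to left); $\rho_N(B)=e^\star_{[1,L-1]}\cdots e^\star_{[1,1]}(B)$. *)

theory Defs
  imports Main "HOL-Library.Product_Lexorder"
begin

text \<open>A partition is a weakly decreasing list of positive naturals.
  A tuple B = (B_1,...,B_L) of subsets of [n] is a list of sets; row r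
  (1-based, bottom to top) is B ! (r-1).\<close>

definition is_partition :: "nat list \<Rightarrow> bool" where
  "is_partition lam \<longleftrightarrow> sorted_wrt (\<ge>) lam \<and> 0 \<notin> set lam"

definition first_part :: "nat list \<Rightarrow> nat" where
  "first_part lam = (if lam = [] then 0 else hd lam)"

definition conj_part :: "nat list \<Rightarrow> nat \<Rightarrow> nat" where
  "conj_part lam j = length (filter (\<lambda>x. j \<le> x) lam)"

definition next_ball :: "nat set \<Rightarrow> nat \<Rightarrow> nat" where
  "next_ball A c = (if {d\<in>A. c \<le> d} \<noteq> {} then Min {d\<in>A. c \<le> d} else Min A)"

text \<open>Pair the (already ordered) balls (column, label) of row r with the
  unlabelled balls A of row r-1; returns labels of row r-1 and the maj
  contribution of the wrapping pairings.\<close>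
fun pair_row :: "nat \<Rightarrow> (nat \<times> nat) list \<Rightarrow> nat set \<Rightarrow> (nat \<Rightarrow> nat option) \<Rightarrow> nat
    \<Rightarrow> (nat \<Rightarrow> nat option) \<times> nat" where
  "pair_row r [] A lab m = (lab, m)"
| "pair_row r ((c,l)#xs) A lab m =
     (let d = next_ball A c in
      pair_row r xs (A - {d}) (lab(d \<mapsto> l)) (m + (if d < c then l + 1 - r else 0)))"

text \<open>maj_from B r lab: process rows r, r-1, ..., 2, where lab gives the labels
  already assigned to balls of row r (unlabelled balls get label r).\<close>
fun maj_from :: "nat set list \<Rightarrow> nat \<Rightarrow> (nat \<Rightarrow> nat option) \<Rightarrow> nat" where
  "maj_from B 0 lab = 0"
| "maj_from B (Suc 0) lab = 0"
| "maj_from B (Suc (Suc k)) lab =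
     (let r = Suc (Suc k);
          lab' = (\<lambda>c. case lab c of Some l \<Rightarrow> l | None \<Rightarrow> r);
          balls = sort_key (\<lambda>c. (- int (lab' c), c)) (sorted_list_of_set (B ! Suc k));
          res = pair_row r (map (\<lambda>c. (c, lab' c)) balls) (B ! k) Map.empty 0
      in snd res + maj_from B (Suc k) (fst res))"

definition maj :: "nat set list \<Rightarrow> nat" where
  "maj B = maj_from B (length B) Map.empty"

definition nonwrapping :: "nat set list \<Rightarrow> bool" where
  "nonwrapping B \<longleftrightarrow> maj B = 0"

definition col_count :: "nat set list \<Rightarrow> nat \<Rightarrow> nat" where
  "col_count B j = card {r \<in> {1..length B}. j \<in> B ! (r - 1)}"

definition MLQ0 :: "nat list \<Rightarrow> nat list \<Rightarrow> nat set list set" where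
  "MLQ0 lam alpha =
     {B. length B = first_part lam
       \<and> (\<forall>r \<in> {1..length B}. B ! (r - 1) \<subseteq> {1..length alpha}
                               \<and> card (B ! (r - 1)) = conj_part lam r)
       \<and> nonwrapping B
       \<and> (\<forall>j \<in> {1..length alpha}. col_count B j = alpha ! (j - 1))}"

text \<open>Ball in (r,c) goes to (L+1-r, n+1-c).\<close>
definition rot2 :: "nat \<Rightarrow> nat set list \<Rightarrow> nat set list" where
  "rot2 n B = rev (map (\<lambda>S. (\<lambda>c. Suc n - c) ` S) B)"

text \<open>Column word: cells (row, column) scanned columns left to right,
  each column top to bottom; cw records the row numbers.\<close>
definition cw_cells :: "nat \<Rightarrow> nat set list \<Rightarrow> (nat \<times> nat) list" where
  "cw_cells n B = concat (map (\<lambda>j. map (\<lambda>r. (r, j))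
       (filter (\<lambda>r. j \<in> B ! (r - 1)) (rev [1..<Suc (length B)]))) [1..<Suc n])"

definition cw :: "nat \<Rightarrow> nat set list \<Rightarrow> nat list" where
  "cw n B = map fst (cw_cells n B)"

text \<open>Positions (0-based) of the unmatched "(" (letters i+1) in Par_i(w):
  the usual bracket matching, computed with a stack of open positions.\<close>
fun unmatched_open :: "nat \<Rightarrow> nat list \<Rightarrow> nat \<Rightarrow> nat list \<Rightarrow> nat set" where
  "unmatched_open i [] p st = set st"
| "unmatched_open i (x#xs) p st =
     (if x = Suc i then unmatched_open i xs (Suc p) (p # st)
      else if x = i then (case st of [] \<Rightarrow> unmatched_open i xs (Suc p) []
                                   | q # st' \<Rightarrow> unmatched_open i xs (Suc p) st')
      else unmatched_open i xs (Suc p) st)"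

definition e_star :: "nat \<Rightarrow> nat \<Rightarrow> nat set list \<Rightarrow> nat set list" where
  "e_star n i B =
     (let U = (\<lambda>p. snd (cw_cells n B ! p)) ` unmatched_open i (cw n B) 0 []
      in B[i - 1 := B ! (i - 1) \<union> U, i := B ! i - U])"

text \<open>e_[a,b] = e_a e_(a+1) ... e_b, acting right to left (e_b first).\<close>
definition e_star_int :: "nat \<Rightarrow> nat \<Rightarrow> nat \<Rightarrow> nat set list \<Rightarrow> nat set list" where
  "e_star_int n a b B = fold (e_star n) (rev [a..<Suc b]) B"

text \<open>rho_N = e_[1,L-1] ... e_[1,1], with e_[1,1] applied first.\<close>
definition rho_N :: "nat \<Rightarrow> nat set list \<Rightarrow> nat set list" where
  "rho_N n B = fold (\<lambda>k. e_star_int n 1 k) [1..<length B] B"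

definition rho_up :: "nat \<Rightarrow> nat set list \<Rightarrow> nat set list" where
  "rho_up n B = rho_N n (rot2 n B)"

end

theory Submission
  imports Defs
begin


definition pcI :: "nat set \<Rightarrow> nat \<Rightarrow> int" where
  "pcI X t = int (card {c\<in>X. c \<le> t})"

lemma pcI_Suc: "pcI X (Suc t) = pcI X t + (if Suc t \<in> X then 1 else 0)"
proof -
  have fin: "finite {c\<in>X. c \<le> t}" by simp
  show ?thesis
  proof (cases "Suc t \<in> X")
    case True
    have "{c\<in>X. c \<le> Suc t} = insert (Suc t) {c\<in>X. c \<le> t}" using True by auto
    then show ?thesis using fin True unfolding pcI_def by simp
  next
    case False
    have "{c\<in>X. c \<le> Suc t} = {c\<in>X. c \<le> t}" using False by (auto simp: le_Suc_eq)
    then show ?thesis using False unfolding pcI_def by simp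
  qed
qed

lemma pcI_0: "0 \<notin> X \<Longrightarrow> pcI X 0 = 0"
  unfolding pcI_def by (subgoal_tac "{c\<in>X. c \<le> 0} = {}") auto

lemma pcI_nonneg: "0 \<le> pcI X t" unfolding pcI_def by simp

lemma pcI_ge: "X \<subseteq> {1..n} \<Longrightarrow> n \<le> t \<Longrightarrow> pcI X t = int (card X)"
  unfolding pcI_def by (subgoal_tac "{c\<in>X. c \<le> t} = X") auto

lemma pcI_mono: "t \<le> t' \<Longrightarrow> pcI X t \<le> pcI X t'"
  unfolding pcI_def by (auto intro!: card_mono)

lemma pcI_step: "pcI X (Suc t) - pcI X t \<in> {0,1}"
  by (simp add: pcI_Suc)

lemma pcI_mem: "Suc t \<in> X \<longleftrightarrow> pcI X (Suc t) = pcI X t + 1"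
  by (simp add: pcI_Suc)

lemma set_eq_pcI:
  assumes "X \<subseteq> {1..n}" "X' \<subseteq> {1..n}" "\<forall>t\<le>n. pcI X t = pcI X' t"
  shows "X = X'"
proof -
  have "c \<in> X \<longleftrightarrow> c \<in> X'" if "c \<in> X \<union> X'" for c
  proof -
    have "1 \<le> c" "c \<le> n" using that assms(1,2) by auto
    then obtain d where c: "c = Suc d" "Suc d \<le> n" by (cases c) auto
    have "pcI X (Suc d) = pcI X' (Suc d)" "pcI X d = pcI X' d" using assms(3) c by auto
    then show ?thesis using c by (simp add: pcI_Suc split: if_splits)
  qed
  then show ?thesis by blast
qed

lemma pcI_union: "X \<inter> Y = {} \<Longrightarrow> pcI (X \<union> Y) t = pcI X t + pcI Y t"
proof -
  assume d: "X \<inter> Y = {}"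
  have "{c\<in>X \<union> Y. c \<le> t} = {c\<in>X. c \<le> t} \<union> {c\<in>Y. c \<le> t}" by auto
  moreover have "card ({c\<in>X. c \<le> t} \<union> {c\<in>Y. c \<le> t}) = card {c\<in>X. c \<le> t} + card {c\<in>Y. c \<le> t}"
    by (rule card_Un_disjoint) (use d in auto)
  ultimately show ?thesis unfolding pcI_def by simp
qed

lemma pcI_diff: "U \<subseteq> X \<Longrightarrow> pcI (X - U) t = pcI X t - pcI U t"
proof -
  assume s: "U \<subseteq> X"
  have "{c\<in>X. c \<le> t} = {c\<in>X - U. c \<le> t} \<union> {c\<in>U. c \<le> t}" using s by auto
  moreover have "card ({c\<in>X - U. c \<le> t} \<union> {c\<in>U. c \<le> t}) = card {c\<in>X - U. c \<le> t} + card {c\<in>U. c \<le> t}"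
    by (rule card_Un_disjoint) auto
  ultimately show ?thesis unfolding pcI_def by simp
qed

definition Dd :: "nat set \<Rightarrow> nat set \<Rightarrow> nat \<Rightarrow> int" where
  "Dd Y X t = pcI X t - pcI Y t"

definition mm :: "nat \<Rightarrow> nat set \<Rightarrow> nat set \<Rightarrow> nat \<Rightarrow> int" where
  "mm n Y X t = Min (Dd Y X ` {t..n})"

definition valid :: "nat \<Rightarrow> nat set \<Rightarrow> nat set \<Rightarrow> bool" where
  "valid n Y X \<longleftrightarrow> (\<forall>t\<le>n. pcI Y t \<le> pcI X t)"

definition Uset :: "nat \<Rightarrow> nat set \<Rightarrow> nat set \<Rightarrow> nat set" where
  "Uset n Y X = {c. 1 \<le> c \<and> c \<le> n \<and> c \<in> X \<and> c \<notin> Y \<and> (\<forall>s\<in>{c..n}. Dd Y X c \<le> Dd Y X s)}"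

definition Elow :: "nat \<Rightarrow> nat set \<Rightarrow> nat set \<Rightarrow> nat set" where
  "Elow n Y X = Y \<union> Uset n Y X"

definition Eup :: "nat \<Rightarrow> nat set \<Rightarrow> nat set \<Rightarrow> nat set" where
  "Eup n Y X = X - Uset n Y X"

lemma mm_le: "t \<le> u \<Longrightarrow> u \<le> n \<Longrightarrow> mm n Y X t \<le> Dd Y X u"
  unfolding mm_def by (rule Min_le) auto

lemma mm_attained: "t \<le> n \<Longrightarrow> \<exists>u\<in>{t..n}. mm n Y X t = Dd Y X u"
proof -
  assume "t \<le> n"
  then have "Min (Dd Y X ` {t..n}) \<in> Dd Y X ` {t..n}" by (intro Min_in) auto
  then show ?thesis unfolding mm_def by auto
qed

lemma mm_ge: "t \<le> n \<Longrightarrow> (\<And>u. t \<le> u \<Longrightarrow> u \<le> n \<Longrightarrow> a \<le> Dd Y X u) \<Longrightarrow> a \<le> mm n Y X t"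
proof -
  assume a: "t \<le> n" "\<And>u. t \<le> u \<Longrightarrow> u \<le> n \<Longrightarrow> a \<le> Dd Y X u"
  obtain u where "u \<in> {t..n}" "mm n Y X t = Dd Y X u" using mm_attained[OF a(1)] by blast
  then show ?thesis using a(2) by simp
qed

lemma mm_last: "mm n Y X n = Dd Y X n"
  unfolding mm_def by simp

lemma mm_Suc: "t < n \<Longrightarrow> mm n Y X t = min (Dd Y X t) (mm n Y X (Suc t))"
proof -
  assume "t < n"
  then have "{t..n} = insert t {Suc t..n}" by auto
  then have "Dd Y X ` {t..n} = insert (Dd Y X t) (Dd Y X ` {Suc t..n})" by simp
  moreover have "Dd Y X ` {Suc t..n} \<noteq> {}" using \<open>t < n\<close> by simp
  ultimately show ?thesis unfolding mm_def by (simp add: Min_insert)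
qed

lemma mm_mono: "t \<le> u \<Longrightarrow> u \<le> n \<Longrightarrow> mm n Y X t \<le> mm n Y X u"
proof -
  assume a: "t \<le> u" "u \<le> n"
  obtain v where v: "v \<in> {u..n}" "mm n Y X u = Dd Y X v" using mm_attained[OF a(2)] by blast
  have "mm n Y X t \<le> Dd Y X v" using v a by (intro mm_le) auto
  then show ?thesis using v by simp
qed

lemma Dd_Suc: "Dd Y X (Suc t) = Dd Y X t + (if Suc t \<in> X then 1 else 0) - (if Suc t \<in> Y then 1 else 0)"
  unfolding Dd_def by (simp add: pcI_Suc)

lemma valid_Dd: "valid n Y X \<Longrightarrow> t \<le> n \<Longrightarrow> 0 \<le> Dd Y X t"
  unfolding valid_def Dd_def by auto

lemma valid_mm: "valid n Y X \<Longrightarrow> t \<le> n \<Longrightarrow> 0 \<le> mm n Y X t"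
  by (rule mm_ge) (auto intro: valid_Dd)

lemma pcU:
  assumes Y: "Y \<subseteq> {1..n}" and X: "X \<subseteq> {1..n}" and v: "valid n Y X"
  shows "t \<le> n \<Longrightarrow> pcI (Uset n Y X) t = mm n Y X t"
proof (induction t)
  case 0
  have "pcI (Uset n Y X) 0 = 0" by (rule pcI_0) (auto simp: Uset_def)
  moreover have "mm n Y X 0 = 0"
  proof -
    have "mm n Y X 0 \<le> Dd Y X 0" by (rule mm_le) auto
    moreover have "pcI X 0 = 0" "pcI Y 0 = 0" using X Y by (auto intro!: pcI_0)
    then have "Dd Y X 0 = 0" by (simp add: Dd_def)
    ultimately show ?thesis using valid_mm[OF v, of 0] by simp
  qed
  ultimately show ?case by simp
next
  case (Suc t)
  let ?U = "Uset n Y X"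
  have IH: "pcI ?U t = mm n Y X t" using Suc by simp
  have ms: "mm n Y X t = min (Dd Y X t) (mm n Y X (Suc t))" using Suc.prems by (intro mm_Suc) simp
  show ?case
  proof (cases "Suc t \<in> ?U")
    case True
    then have d1: "Dd Y X (Suc t) = Dd Y X t + 1" by (simp add: Uset_def Dd_Suc)
    have "mm n Y X (Suc t) = Dd Y X (Suc t)"
    proof (rule antisym)
      show "mm n Y X (Suc t) \<le> Dd Y X (Suc t)" using Suc.prems by (intro mm_le) auto
      show "Dd Y X (Suc t) \<le> mm n Y X (Suc t)" using True Suc.prems
        by (intro mm_ge) (auto simp: Uset_def)
    qed
    then show ?thesis using IH ms d1 True by (simp add: pcI_Suc)
  next
    case False
    have "mm n Y X t = mm n Y X (Suc t)"
    proof (rule ccontr)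
      assume ne: "mm n Y X t \<noteq> mm n Y X (Suc t)"
      have le: "mm n Y X t \<le> mm n Y X (Suc t)" using Suc.prems by (intro mm_mono) auto
      have a: "mm n Y X t = Dd Y X t" "Dd Y X t < mm n Y X (Suc t)" using ms ne le by linarith+
      have b: "mm n Y X (Suc t) \<le> Dd Y X (Suc t)" using Suc.prems by (intro mm_le) auto
      have c: "Dd Y X (Suc t) \<le> Dd Y X t + 1" by (simp add: Dd_Suc)
      have e: "Dd Y X (Suc t) = Dd Y X t + 1" using a b c by linarith
      have mem: "Suc t \<in> X" "Suc t \<notin> Y" using e unfolding Dd_Suc by (auto split: if_splits)
      have "\<forall>s\<in>{Suc t..n}. Dd Y X (Suc t) \<le> Dd Y X s"
      proof
        fix s assume "s \<in> {Suc t..n}"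
        then have "mm n Y X (Suc t) \<le> Dd Y X s" by (intro mm_le) auto
        then show "Dd Y X (Suc t) \<le> Dd Y X s" using e a by linarith
      qed
      then have "Suc t \<in> ?U" using mem Suc.prems by (auto simp: Uset_def)
      then show False using False by simp
    qed
    then show ?thesis using IH False by (simp add: pcI_Suc)
  qed
qed



abbreviation rows :: "nat \<Rightarrow> nat set \<Rightarrow> bool" where
  "rows n X \<equiv> X \<subseteq> {1..n}"

lemma mm_0: "Y \<subseteq> {1..n} \<Longrightarrow> X \<subseteq> {1..n} \<Longrightarrow> valid n Y X \<Longrightarrow> mm n Y X 0 = 0"
proof -
  assume X: "X \<subseteq> {1..n}" and Y: "Y \<subseteq> {1..n}" and v: "valid n Y X"
  have "mm n Y X 0 \<le> Dd Y X 0" by (rule mm_le) auto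
  moreover have "pcI X 0 = 0" "pcI Y 0 = 0" using X Y by (auto intro!: pcI_0)
  then have "Dd Y X 0 = 0" by (simp add: Dd_def)
  ultimately show ?thesis using valid_mm[OF v, of 0] by simp
qed

lemma Uset_sub: "Uset n Y X \<subseteq> X" "Uset n Y X \<inter> Y = {}"
  unfolding Uset_def by auto

lemma E_rows: "rows n Y \<Longrightarrow> rows n X \<Longrightarrow> rows n (Elow n Y X) \<and> rows n (Eup n Y X)"
  unfolding Elow_def Eup_def Uset_def by auto

lemma E_pc:
  assumes "rows n Y" "rows n X" "valid n Y X" "t \<le> n"
  shows "pcI (Elow n Y X) t = pcI Y t + mm n Y X t"
    and "pcI (Eup n Y X) t = pcI X t - mm n Y X t"
proof -
  have u: "pcI (Uset n Y X) t = mm n Y X t" using pcU assms by blast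
  show "pcI (Elow n Y X) t = pcI Y t + mm n Y X t"
    unfolding Elow_def using pcI_union[of Y "Uset n Y X" t] Uset_sub u by (simp add: Int_commute)
  show "pcI (Eup n Y X) t = pcI X t - mm n Y X t"
    unfolding Eup_def using pcI_diff[of "Uset n Y X" X t] Uset_sub u by simp
qed

lemma mm_le_Dd: "t \<le> n \<Longrightarrow> mm n Y X t \<le> Dd Y X t"
  by (rule mm_le) auto

lemma mm_le_Dn: "t \<le> n \<Longrightarrow> mm n Y X t \<le> Dd Y X n"
  by (rule mm_le) auto

lemma card_pcI: "rows n X \<Longrightarrow> int (card X) = pcI X n"
  using pcI_ge[of X n n] by simp

lemma E_card:
  assumes "rows n Y" "rows n X" "valid n Y X"
  shows "card (Elow n Y X) = card X" "card (Eup n Y X) = card Y"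
proof -
  have r: "rows n (Elow n Y X)" "rows n (Eup n Y X)" using E_rows assms by auto
  have "mm n Y X n = Dd Y X n" by (rule mm_last)
  then have "pcI (Elow n Y X) n = pcI X n" "pcI (Eup n Y X) n = pcI Y n"
    using E_pc[OF assms, of n] by (auto simp: Dd_def)
  then show "card (Elow n Y X) = card X" "card (Eup n Y X) = card Y"
    using card_pcI[OF r(1)] card_pcI[OF r(2)] card_pcI[OF assms(1)] card_pcI[OF assms(2)] by auto
qed

lemma valid_trans: "valid n A B \<Longrightarrow> valid n B C \<Longrightarrow> valid n A C"
  unfolding valid_def by force

lemma E_valid:
  assumes "rows n Y" "rows n X" "valid n Y X"
  shows "valid n Y (Elow n Y X)" "valid n (Elow n Y X) X"
        "valid n (Eup n Y X) X" "valid n Y (Eup n Y X)"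
proof -
  have "\<And>t. t \<le> n \<Longrightarrow> 0 \<le> mm n Y X t \<and> mm n Y X t \<le> Dd Y X t"
    using valid_mm[OF assms(3)] mm_le_Dd by blast
  then show "valid n Y (Elow n Y X)" "valid n (Elow n Y X) X"
        "valid n (Eup n Y X) X" "valid n Y (Eup n Y X)"
    unfolding valid_def using E_pc[OF assms] by (force simp: Dd_def)+
qed

lemma Lstar:
  assumes Y: "rows n Y" and X: "rows n X" and C: "rows n C"
    and v1: "valid n Y X" and v2: "valid n X C"
  shows "valid n X (Elow n (Eup n Y X) C)"
proof -
  let ?X' = "Eup n Y X"
  have X': "rows n ?X'" using E_rows[OF Y X] by auto
  have v3: "valid n ?X' C" using valid_trans[OF E_valid(3)[OF Y X v1] v2] .
  show ?thesis unfolding valid_def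
  proof (intro allI impI)
    fix t assume t: "t \<le> n"
    have "mm n Y X t \<le> mm n ?X' C t"
    proof (rule mm_ge[OF t])
      fix u assume u: "t \<le> u" "u \<le> n"
      have "Dd ?X' C u = pcI C u - pcI X u + mm n Y X u"
        using E_pc(2)[OF Y X v1 u(2)] by (simp add: Dd_def)
      moreover have "pcI X u \<le> pcI C u" using v2 u unfolding valid_def by auto
      moreover have "mm n Y X t \<le> mm n Y X u" using u by (rule mm_mono)
      ultimately show "mm n Y X t \<le> Dd ?X' C u" by linarith
    qed
    then show "pcI X t \<le> pcI (Elow n ?X' C) t"
      using E_pc(1)[OF X' C v3 t] E_pc(2)[OF Y X v1 t] by linarith
  qed
qed

definition sdom :: "nat \<Rightarrow> nat set \<Rightarrow> nat set \<Rightarrow> bool" where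
  "sdom n A T \<longleftrightarrow> (\<forall>t\<le>n. int (card T) - int (card A) \<le> pcI T t - pcI A t)"

lemma L1:
  assumes "rows n Y" "rows n X" "valid n Y X"
  shows "sdom n (Elow n Y X) (Eup n Y X)"
  unfolding sdom_def
proof (intro allI impI)
  fix t assume t: "t \<le> n"
  have "mm n Y X t \<le> Dd Y X t" "mm n Y X t \<le> Dd Y X n" using t mm_le_Dd mm_le_Dn by auto
  moreover have "int (card X) = pcI X n" "int (card Y) = pcI Y n" using card_pcI assms by auto
  ultimately show "int (card (Eup n Y X)) - int (card (Elow n Y X)) \<le> pcI (Eup n Y X) t - pcI (Elow n Y X) t"
    using E_card[OF assms] E_pc[OF assms t] by (simp add: Dd_def)
qed

lemma LT:
  assumes A: "rows n A" and B: "rows n Bm" and C: "rows n C"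
    and s: "sdom n A Bm" and v1: "valid n Bm C" and v2: "valid n A (Elow n Bm C)"
  shows "sdom n (Eup n A (Elow n Bm C)) (Eup n Bm C)"
  unfolding sdom_def
proof (intro allI impI)
  fix t assume t: "t \<le> n"
  let ?b1 = "Elow n Bm C"
  have b1: "rows n ?b1" using E_rows[OF B C] by auto
  have cA: "int (card A) = pcI A n" "int (card Bm) = pcI Bm n" "int (card C) = pcI C n"
    using card_pcI A B C by auto
  have m2: "int (card Bm) - int (card A) + mm n Bm C t \<le> mm n A ?b1 t"
  proof (rule mm_ge[OF t])
    fix u assume u: "t \<le> u" "u \<le> n"
    have "Dd A ?b1 u = pcI Bm u + mm n Bm C u - pcI A u"
      using E_pc(1)[OF B C v1 u(2)] by (simp add: Dd_def)
    moreover have "int (card Bm) - int (card A) \<le> pcI Bm u - pcI A u" using s u unfolding sdom_def by auto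
    moreover have "mm n Bm C t \<le> mm n Bm C u" using u by (rule mm_mono)
    ultimately show "int (card Bm) - int (card A) + mm n Bm C t \<le> Dd A ?b1 u" by linarith
  qed
  have "mm n Bm C t \<le> Dd Bm C t" using t mm_le_Dd by auto
  moreover have "card (Eup n Bm C) = card Bm" using E_card[OF B C v1] by simp
  moreover have "card (Eup n A ?b1) = card A" using E_card[OF A b1 v2] by simp
  moreover have "pcI (Eup n A ?b1) t = pcI ?b1 t - mm n A ?b1 t" using E_pc(2)[OF A b1 v2 t] .
  moreover have "pcI ?b1 t = pcI Bm t + mm n Bm C t" using E_pc(1)[OF B C v1 t] .
  moreover have "pcI (Eup n Bm C) t = pcI C t - mm n Bm C t" using E_pc(2)[OF B C v1 t] .
  ultimately show "int (card (Eup n Bm C)) - int (card (Eup n A ?b1)) \<le> pcI (Eup n Bm C) t - pcI (Eup n A ?b1) t"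
    using m2 by (simp add: Dd_def)
qed

lemma mm_recover:
  assumes Y: "rows n Y" and X: "rows n X" and v: "valid n Y X"
  shows "t \<le> n \<Longrightarrow> mm n Y X t = Max ((\<lambda>u. pcI (Elow n Y X) u - pcI (Eup n Y X) u) ` {0..t})"
proof (induction t)
  case 0
  have "pcI (Elow n Y X) 0 = 0" "pcI (Eup n Y X) 0 = 0" using E_rows[OF Y X] by (auto intro!: pcI_0)
  then show ?case using mm_0[OF Y X v] by simp
next
  case (Suc t)
  let ?G = "\<lambda>u. pcI (Elow n Y X) u - pcI (Eup n Y X) u"
  have "{0..Suc t} = insert (Suc t) {0..t}" by auto
  then have "Max (?G ` {0..Suc t}) = max (?G (Suc t)) (Max (?G ` {0..t}))"
    by (simp add: Max_insert)
  also have "Max (?G ` {0..t}) = mm n Y X t" using Suc by simp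
  also have "?G (Suc t) = 2 * mm n Y X (Suc t) - Dd Y X (Suc t)"
    using E_pc[OF Y X v Suc.prems] by (simp add: Dd_def)
  finally have eq: "Max (?G ` {0..Suc t}) = max (2 * mm n Y X (Suc t) - Dd Y X (Suc t)) (mm n Y X t)" .
  have ms: "mm n Y X t = min (Dd Y X t) (mm n Y X (Suc t))" using Suc.prems by (intro mm_Suc) simp
  have a: "mm n Y X (Suc t) \<le> Dd Y X (Suc t)" using Suc.prems mm_le_Dd by blast
  have b: "Dd Y X (Suc t) \<le> Dd Y X t + 1" by (simp add: Dd_Suc)
  show ?case using eq ms a b by linarith
qed

lemma E_inj:
  assumes Y: "rows n Y" and X: "rows n X" and v: "valid n Y X"
    and Y2: "rows n Y2" and X2: "rows n X2" and v2: "valid n Y2 X2"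
    and e1: "Elow n Y X = Elow n Y2 X2" and e2: "Eup n Y X = Eup n Y2 X2"
  shows "Y = Y2 \<and> X = X2"
proof -
  have m: "mm n Y X t = mm n Y2 X2 t" if "t \<le> n" for t
    using mm_recover[OF Y X v that] mm_recover[OF Y2 X2 v2 that] e1 e2 by simp
  have "\<forall>t\<le>n. pcI Y t = pcI Y2 t"
    using E_pc(1)[OF Y X v] E_pc(1)[OF Y2 X2 v2] e1 m by force
  moreover have "\<forall>t\<le>n. pcI X t = pcI X2 t"
    using E_pc(2)[OF Y X v] E_pc(2)[OF Y2 X2 v2] e2 m by force
  ultimately show ?thesis using set_eq_pcI Y Y2 X X2 by blast
qed

lemma E_col: "rows n Y \<Longrightarrow> rows n X \<Longrightarrow>
  (if j \<in> Elow n Y X then 1 else 0) + (if j \<in> Eup n Y X then 1 else (0::nat)) =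
  (if j \<in> Y then 1 else 0) + (if j \<in> X then 1 else 0)"
  unfolding Elow_def Eup_def Uset_def by auto



definition colstep :: "nat set \<Rightarrow> nat set \<Rightarrow> nat list \<Rightarrow> nat \<Rightarrow> nat list" where
  "colstep Y X st c = (if c \<in> X \<and> c \<notin> Y then c # st else if c \<in> Y \<and> c \<notin> X then tl st else st)"

definition stk :: "nat set \<Rightarrow> nat set \<Rightarrow> nat \<Rightarrow> nat list" where
  "stk Y X t = fold (\<lambda>c st. colstep Y X st c) [1..<Suc t] []"

lemma stk_0: "stk Y X 0 = []" by (simp add: stk_def)

lemma stk_Suc: "stk Y X (Suc t) = colstep Y X (stk Y X t) (Suc t)"
  by (simp add: stk_def)

definition Sset :: "nat set \<Rightarrow> nat set \<Rightarrow> nat \<Rightarrow> nat set" where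
  "Sset Y X t = {c. 1 \<le> c \<and> c \<le> t \<and> c \<in> X \<and> c \<notin> Y \<and> (\<forall>s\<in>{c..t}. Dd Y X c \<le> Dd Y X s)}"

lemma Sset_Suc: "Sset Y X (Suc t) = {c \<in> Sset Y X t. Dd Y X c \<le> Dd Y X (Suc t)}
   \<union> (if Suc t \<in> X \<and> Suc t \<notin> Y then {Suc t} else {})"
proof -
  have "c \<in> Sset Y X (Suc t) \<longleftrightarrow> c \<in> {c \<in> Sset Y X t. Dd Y X c \<le> Dd Y X (Suc t)}
   \<union> (if Suc t \<in> X \<and> Suc t \<notin> Y then {Suc t} else {})" for c
  proof (cases "c \<le> t")
    case True
    then have "{c..Suc t} = insert (Suc t) {c..t}" by auto
    then show ?thesis using True by (auto simp: Sset_def)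
  next
    case False
    then show ?thesis by (auto simp: Sset_def le_Suc_eq)
  qed
  then show ?thesis by blast
qed

lemma stk_inv:
  assumes Y: "rows n Y" and X: "rows n X" and v: "valid n Y X"
  shows "t \<le> n \<Longrightarrow> length (stk Y X t) = nat (Dd Y X t)
     \<and> (\<forall>k < length (stk Y X t). Dd Y X (stk Y X t ! k) = Dd Y X t - int k)
     \<and> set (stk Y X t) = Sset Y X t"
proof (induction t)
  case 0
  have "pcI X 0 = 0" "pcI Y 0 = 0" using X Y by (auto intro!: pcI_0)
  then show ?case by (simp add: stk_0 Dd_def Sset_def)
next
  case (Suc t)
  let ?st = "stk Y X t"
  let ?c = "Suc t"
  have IH: "length ?st = nat (Dd Y X t)" "\<forall>k < length ?st. Dd Y X (?st ! k) = Dd Y X t - int k"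
    "set ?st = Sset Y X t" using Suc by auto
  have d0: "0 \<le> Dd Y X t" "0 \<le> Dd Y X ?c" using valid_Dd[OF v] Suc.prems by auto
  have oldle: "\<forall>c\<in>Sset Y X t. Dd Y X c \<le> Dd Y X t" by (auto simp: Sset_def)
  show ?case
  proof (cases "?c \<in> X \<and> ?c \<notin> Y")
    case True
    then have e: "Dd Y X ?c = Dd Y X t + 1" by (simp add: Dd_Suc)
    have s: "stk Y X ?c = ?c # ?st" using True by (simp add: stk_Suc colstep_def)
    have "\<forall>k < length (?c # ?st). Dd Y X ((?c # ?st) ! k) = Dd Y X ?c - int k"
    proof (intro allI impI)
      fix k assume "k < length (?c # ?st)"
      then show "Dd Y X ((?c # ?st) ! k) = Dd Y X ?c - int k"
        using IH(2) e by (cases k) auto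
    qed
    moreover have "set (?c # ?st) = Sset Y X ?c"
      using IH(3) True oldle e by (auto simp: Sset_Suc)
    ultimately show ?thesis using s IH(1) d0 e by simp
  next
    case nX: False
    show ?thesis
    proof (cases "?c \<in> Y \<and> ?c \<notin> X")
      case True
      then have e: "Dd Y X ?c = Dd Y X t - 1" by (simp add: Dd_Suc)
      then have ne: "?st \<noteq> []" using IH(1) d0 by auto
      then obtain h rest where hr: "?st = h # rest" by (cases ?st) auto
      have s: "stk Y X ?c = rest" using True hr by (simp add: stk_Suc colstep_def)
      have dh: "Dd Y X h = Dd Y X t" using IH(2) hr by force
      have rk: "\<forall>k < length rest. Dd Y X (rest ! k) = Dd Y X ?c - int k"
      proof (intro allI impI)
        fix k assume "k < length rest"
        then have "Dd Y X (?st ! Suc k) = Dd Y X t - int (Suc k)" using IH(2) hr by auto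
        then show "Dd Y X (rest ! k) = Dd Y X ?c - int k" using hr e by simp
      qed
      have "set rest = {c \<in> Sset Y X t. Dd Y X c \<le> Dd Y X ?c}"
      proof (rule set_eqI)
        fix c
        show "c \<in> set rest \<longleftrightarrow> c \<in> {c \<in> Sset Y X t. Dd Y X c \<le> Dd Y X ?c}"
        proof
          assume "c \<in> set rest"
          then obtain k where k: "k < length rest" "c = rest ! k" by (auto simp: in_set_conv_nth)
          then show "c \<in> {c \<in> Sset Y X t. Dd Y X c \<le> Dd Y X ?c}"
            using rk IH(3) hr \<open>c \<in> set rest\<close> by auto
        next
          assume a: "c \<in> {c \<in> Sset Y X t. Dd Y X c \<le> Dd Y X ?c}"
          then have "c \<in> set ?st" using IH(3) by auto
          then obtain k where k: "k < length ?st" "c = ?st ! k" by (auto simp: in_set_conv_nth)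
          have "k \<noteq> 0" using k a dh hr e by (cases k) auto
          then obtain k' where "k = Suc k'" by (cases k) auto
          then show "c \<in> set rest" using k hr by auto
        qed
      qed
      moreover have "Sset Y X ?c = {c \<in> Sset Y X t. Dd Y X c \<le> Dd Y X ?c}"
        using True by (simp add: Sset_Suc)
      ultimately show ?thesis using s rk IH(1) hr e d0 by simp
    next
      case False
      then have e: "Dd Y X ?c = Dd Y X t" using nX by (auto simp: Dd_Suc)
      have s: "stk Y X ?c = ?st" using False nX by (auto simp: stk_Suc colstep_def)
      have "Sset Y X ?c = Sset Y X t" using nX oldle e by (auto simp: Sset_Suc)
      then show ?thesis using s IH e by simp
    qed
  qed
qed

lemma stk_Uset:
  assumes "rows n Y" "rows n X" "valid n Y X"
  shows "set (stk Y X n) = Uset n Y X"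
  using stk_inv[OF assms order_refl] by (simp add: Sset_def Uset_def)

definition um2step :: "nat \<Rightarrow> nat \<times> nat \<Rightarrow> nat list \<Rightarrow> nat list" where
  "um2step i x st = (if fst x = Suc i then snd x # st else if fst x = i then tl st else st)"

lemma um_A:
  "\<forall>j < length cs. g (p + j) = snd (cs ! j) \<Longrightarrow>
   g ` unmatched_open i (map fst cs) p st = set (fold (um2step i) cs (map g st))"
proof (induction cs arbitrary: p st)
  case Nil
  then show ?case by simp
next
  case (Cons x cs)
  have g0: "g p = snd x" using Cons.prems by (metis add.right_neutral length_Cons nth_Cons_0 zero_less_Suc)
  have gs: "\<forall>j < length cs. g (Suc p + j) = snd (cs ! j)"
    using Cons.prems by (metis add_Suc_shift add_Suc_right length_Cons nth_Cons_Suc Suc_less_eq)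
  show ?case
  proof (cases "fst x = Suc i")
    case True
    then show ?thesis using Cons.IH[OF gs, of "p # st"] g0 by (simp add: um2step_def)
  next
    case F1: False
    show ?thesis
    proof (cases "fst x = i")
      case True
      then show ?thesis
      proof (cases st)
        case Nil
        then show ?thesis using Cons.IH[OF gs, of "[]"] True F1 by (simp add: um2step_def)
      next
        case (Cons q st')
        then show ?thesis using Cons.IH[OF gs, of "st'"] True F1 by (simp add: um2step_def)
      qed
    next
      case False
      then show ?thesis using Cons.IH[OF gs, of st] F1 by (simp add: um2step_def)
    qed
  qed
qed

lemma fold_um2_skip:
  "(\<forall>r\<in>set rs. r \<noteq> i \<and> r \<noteq> Suc i) \<Longrightarrow> fold (um2step i) (map (\<lambda>r. (r, j)) rs) st = st"
  by (induction rs arbitrary: st) (auto simp: um2step_def)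

lemma blk_fold:
  assumes i: "1 \<le> i" "i < L"
  shows "fold (um2step i) (map (\<lambda>r. (r, j)) (filter (\<lambda>r. j \<in> B ! (r - 1)) (rev [1..<Suc L]))) st
         = colstep (B ! (i - 1)) (B ! i) st j"
proof -
  have "[1..<Suc L] = [1..<i] @ [i..<Suc L]" using i upt_add_eq_append[of 1 i "Suc L - i"] by simp
  also have "[i..<Suc L] = i # Suc i # [Suc (Suc i)..<Suc L]" using i by (simp add: upt_conv_Cons)
  finally have u: "rev [1..<Suc L] = rev [Suc (Suc i)..<Suc L] @ [Suc i, i] @ rev [1..<i]" by simp
  let ?P = "\<lambda>r. j \<in> B ! (r - 1)"
  have s1: "\<forall>r\<in>set (filter ?P (rev [Suc (Suc i)..<Suc L])). r \<noteq> i \<and> r \<noteq> Suc i" by auto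
  have s2: "\<forall>r\<in>set (filter ?P (rev [1..<i])). r \<noteq> i \<and> r \<noteq> Suc i" by auto
  show ?thesis
    unfolding u filter_append map_append fold_append comp_def
    using fold_um2_skip[OF s1] fold_um2_skip[OF s2] i
    by (auto simp: um2step_def colstep_def)
qed

lemma cells_fold:
  assumes i: "1 \<le> i" "i < length B"
  shows "fold (um2step i) (concat (map (\<lambda>j. map (\<lambda>r. (r, j))
       (filter (\<lambda>r. j \<in> B ! (r - 1)) (rev [1..<Suc (length B)]))) [1..<Suc t])) [] = stk (B ! (i - 1)) (B ! i) t"
proof -
  define blk where "blk = (\<lambda>j. map (\<lambda>r. (r, j)) (filter (\<lambda>r. j \<in> B ! (r - 1)) (rev [1..<Suc (length B)])))"
  have bf: "fold (um2step i) (blk j) st = colstep (B ! (i - 1)) (B ! i) st j" for j st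
    unfolding blk_def by (rule blk_fold[OF i])
  have "fold (um2step i) (concat (map blk [1..<Suc t])) [] = stk (B ! (i - 1)) (B ! i) t"
  proof (induction t)
    case 0
    then show ?case by (simp add: stk_0)
  next
    case (Suc t)
    have u: "[1..<Suc (Suc t)] = [1..<Suc t] @ [Suc t]" by simp
    have "fold (um2step i) (concat (map blk [1..<Suc (Suc t)])) []
        = fold (um2step i) (blk (Suc t)) (fold (um2step i) (concat (map blk [1..<Suc t])) [])"
      by (simp only: u map_append concat_append fold_append) simp
    then show ?case using Suc.IH bf by (simp add: stk_Suc)
  qed
  then show ?thesis unfolding blk_def .
qed

lemma e_star_E:
  assumes i: "1 \<le> i" "i < length B"
    and Y: "rows n (B ! (i - 1))" and X: "rows n (B ! i)" and v: "valid n (B ! (i - 1)) (B ! i)"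
  shows "e_star n i B = B[i - 1 := Elow n (B ! (i - 1)) (B ! i), i := Eup n (B ! (i - 1)) (B ! i)]"
proof -
  let ?cs = "cw_cells n B"
  let ?g = "\<lambda>p. snd (?cs ! p)"
  have "?g ` unmatched_open i (cw n B) 0 [] = set (fold (um2step i) ?cs [])"
    using um_A[of ?cs ?g 0 i "[]"] by (simp add: cw_def)
  also have "fold (um2step i) ?cs [] = stk (B ! (i - 1)) (B ! i) n"
    unfolding cw_cells_def using cells_fold[OF i, of n] .
  also have "set (stk (B ! (i - 1)) (B ! i) n) = Uset n (B ! (i - 1)) (B ! i)"
    using stk_Uset[OF Y X v] .
  finally show ?thesis unfolding e_star_def Elow_def Eup_def Let_def by simp
qed



fun insR :: "nat \<Rightarrow> nat set list \<Rightarrow> nat set \<Rightarrow> nat set list" where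
  "insR n [] R = [R]"
| "insR n (h # Hs) R = Eup n h R # insR n Hs (Elow n h R)"

fun vld :: "nat \<Rightarrow> nat set list \<Rightarrow> nat set \<Rightarrow> bool" where
  "vld n [] R = True"
| "vld n (h # Hs) R = (valid n h R \<and> vld n Hs (Elow n h R))"

fun chainH :: "nat \<Rightarrow> nat set list \<Rightarrow> bool" where
  "chainH n (a # b # xs) = (sdom n b a \<and> chainH n (b # xs))"
| "chainH n _ = True"

definition allrows :: "nat \<Rightarrow> nat set list \<Rightarrow> bool" where
  "allrows n xs \<longleftrightarrow> (\<forall>X\<in>set xs. X \<subseteq> {1..n})"

lemma insR_rows: "allrows n H \<Longrightarrow> rows n R \<Longrightarrow> allrows n (insR n H R)"
proof (induction H arbitrary: R)
  case Nil
  then show ?case by (simp add: allrows_def)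
next
  case (Cons h Hs)
  have h: "rows n h" and Hs: "allrows n Hs" using Cons.prems by (auto simp: allrows_def)
  have r1: "rows n (Elow n h R)" "rows n (Eup n h R)" using E_rows[OF h Cons.prems(2)] by auto
  show ?case using Cons.IH[OF Hs r1(1)] r1(2) by (simp add: allrows_def)
qed

lemma insR_length: "length (insR n H R) = Suc (length H)"
  by (induction H arbitrary: R) auto

lemma vld_step:
  "allrows n Gs \<Longrightarrow> rows n W \<Longrightarrow> rows n R \<Longrightarrow> vld n Gs W \<Longrightarrow> valid n W R \<Longrightarrow> vld n (insR n Gs W) R"
proof (induction Gs arbitrary: W R)
  case Nil
  then show ?case by simp
next
  case (Cons g Gs)
  have g: "rows n g" and Gs: "allrows n Gs" using Cons.prems by (auto simp: allrows_def)
  have v1: "valid n g W" and v2: "vld n Gs (Elow n g W)" using Cons.prems by auto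
  have r1: "rows n (Elow n g W)" "rows n (Eup n g W)" using E_rows[OF g Cons.prems(2)] by auto
  have a: "valid n (Eup n g W) R" using valid_trans[OF E_valid(3)[OF g Cons.prems(2) v1] Cons.prems(5)] .
  have r2: "rows n (Elow n (Eup n g W) R)" using E_rows[OF r1(2) Cons.prems(3)] by auto
  have b: "valid n W (Elow n (Eup n g W) R)" using Lstar[OF g Cons.prems(2) Cons.prems(3) v1 Cons.prems(5)] .
  have c: "valid n (Elow n g W) (Elow n (Eup n g W) R)" using valid_trans[OF E_valid(2)[OF g Cons.prems(2) v1] b] .
  have "vld n (insR n Gs (Elow n g W)) (Elow n (Eup n g W) R)"
    using Cons.IH[OF Gs r1(1) r2 v2 c] .
  then show ?case using a by simp
qed

lemma insR_chain:
  "allrows n H \<Longrightarrow> rows n R \<Longrightarrow> chainH n H \<Longrightarrow> vld n H R \<Longrightarrow> chainH n (insR n H R)"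
proof (induction H arbitrary: R)
  case Nil
  then show ?case by simp
next
  case (Cons h Hs)
  have h: "rows n h" and Hs: "allrows n Hs" using Cons.prems by (auto simp: allrows_def)
  have v1: "valid n h R" and v2: "vld n Hs (Elow n h R)" using Cons.prems by auto
  have r1: "rows n (Elow n h R)" "rows n (Eup n h R)" using E_rows[OF h Cons.prems(2)] by auto
  have ch: "chainH n Hs" using Cons.prems(3) by (cases Hs) auto
  have IH: "chainH n (insR n Hs (Elow n h R))" using Cons.IH[OF Hs r1(1) ch v2] .
  show ?case
  proof (cases Hs)
    case Nil
    then show ?thesis using L1[OF h Cons.prems(2) v1] by simp
  next
    case (Cons h2 Hs')
    have h2: "rows n h2" using Hs Cons by (auto simp: allrows_def)
    have s: "sdom n h2 h" using Cons.prems(3) Cons by simp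
    have v3: "valid n h2 (Elow n h R)" using v2 Cons by simp
    have "sdom n (Eup n h2 (Elow n h R)) (Eup n h R)" using LT[OF h2 h Cons.prems(2) s v1 v3] .
    then show ?thesis using IH Cons by simp
  qed
qed

lemma insR_card:
  "allrows n H \<Longrightarrow> rows n R \<Longrightarrow> vld n H R \<Longrightarrow> map card (insR n H R) = map card H @ [card R]"
proof (induction H arbitrary: R)
  case Nil
  then show ?case by simp
next
  case (Cons h Hs)
  have h: "rows n h" and Hs: "allrows n Hs" using Cons.prems by (auto simp: allrows_def)
  have v1: "valid n h R" and v2: "vld n Hs (Elow n h R)" using Cons.prems by auto
  have r1: "rows n (Elow n h R)" using E_rows[OF h Cons.prems(2)] by auto
  show ?case using Cons.IH[OF Hs r1 v2] E_card[OF h Cons.prems(2) v1] by simp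
qed

lemma insR_col:
  "allrows n H \<Longrightarrow> rows n R \<Longrightarrow> length (filter (\<lambda>X. j \<in> X) (insR n H R)) =
     length (filter (\<lambda>X. j \<in> X) H) + (if j \<in> R then 1 else 0)"
proof (induction H arbitrary: R)
  case Nil
  then show ?case by simp
next
  case (Cons h Hs)
  have h: "rows n h" and Hs: "allrows n Hs" using Cons.prems by (auto simp: allrows_def)
  have r1: "rows n (Elow n h R)" using E_rows[OF h Cons.prems(2)] by auto
  have e: "(if j \<in> Elow n h R then 1 else 0) + (if j \<in> Eup n h R then 1 else 0) =
    (if j \<in> h then 1 else 0) + (if j \<in> R then 1 else (0::nat))" using E_col[OF h Cons.prems(2), of j] .
  have "length (filter (\<lambda>X. j \<in> X) (insR n (h # Hs) R)) = (if j \<in> Eup n h R then 1 else 0) +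
     length (filter (\<lambda>X. j \<in> X) Hs) + (if j \<in> Elow n h R then 1 else 0)"
    using Cons.IH[OF Hs r1] by simp
  also have "\<dots> = length (filter (\<lambda>X. j \<in> X) Hs) + (if j \<in> h then 1 else 0) + (if j \<in> R then 1 else 0)"
    using e by linarith
  finally show ?case by simp
qed

lemma insR_inj:
  "allrows n H \<Longrightarrow> rows n R \<Longrightarrow> vld n H R \<Longrightarrow> allrows n H' \<Longrightarrow> rows n R' \<Longrightarrow> vld n H' R' \<Longrightarrow>
   length H = length H' \<Longrightarrow> insR n H R = insR n H' R' \<Longrightarrow> H = H' \<and> R = R'"
proof (induction H arbitrary: H' R R')
  case Nil
  then show ?case by simp
next
  case (Cons h Hs)
  obtain h' Hs' where H': "H' = h' # Hs'" using Cons.prems(7) by (cases H') auto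
  have h: "rows n h" and Hs: "allrows n Hs" using Cons.prems by (auto simp: allrows_def)
  have h': "rows n h'" and Hs': "allrows n Hs'" using Cons.prems H' by (auto simp: allrows_def)
  have v1: "valid n h R" and v2: "vld n Hs (Elow n h R)" using Cons.prems by auto
  have v1': "valid n h' R'" and v2': "vld n Hs' (Elow n h' R')" using Cons.prems H' by auto
  have r1: "rows n (Elow n h R)" using E_rows[OF h Cons.prems(2)] by auto
  have r1': "rows n (Elow n h' R')" using E_rows[OF h' Cons.prems(5)] by auto
  have e: "Eup n h R = Eup n h' R'" "insR n Hs (Elow n h R) = insR n Hs' (Elow n h' R')"
    using Cons.prems(8) H' by auto
  have "Hs = Hs' \<and> Elow n h R = Elow n h' R'"
    using Cons.IH[OF Hs r1 v2 Hs' r1' v2' _ e(2)] Cons.prems(7) H' by simp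
  moreover have "h = h' \<and> R = R'" using E_inj[OF h Cons.prems(2) v1 h' Cons.prems(5) v1'] e(1) calculation by simp
  ultimately show ?case using H' by simp
qed

lemma e_star_int_0: "e_star_int n (Suc 0) 0 S = S"
  by (simp add: e_star_int_def)

lemma stage_eq:
  "allrows n H \<Longrightarrow> rows n R \<Longrightarrow> vld n H R \<Longrightarrow>
   e_star_int n 1 (length H) (rev H @ R # rest) = rev (insR n H R) @ rest"
proof (induction H arbitrary: R rest)
  case Nil
  then show ?case by (simp add: e_star_int_0)
next
  case (Cons h Hs)
  let ?k = "length Hs"
  have h: "rows n h" and Hs: "allrows n Hs" using Cons.prems by (auto simp: allrows_def)
  have v1: "valid n h R" and v2: "vld n Hs (Elow n h R)" using Cons.prems by auto
  have r1: "rows n (Elow n h R)" using E_rows[OF h Cons.prems(2)] by auto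
  let ?S = "rev Hs @ h # R # rest"
  have S1: "?S ! ?k = h" "?S ! Suc ?k = R" by (auto simp: nth_append)
  have "e_star n (Suc ?k) ?S = ?S[?k := Elow n h R, Suc ?k := Eup n h R]"
    using e_star_E[of "Suc ?k" ?S n] S1 h Cons.prems(2) v1 by simp
  also have "\<dots> = rev Hs @ Elow n h R # Eup n h R # rest" by (simp add: list_update_append)
  finally have es: "e_star n (Suc ?k) ?S = rev Hs @ Elow n h R # Eup n h R # rest" .
  have "e_star_int n 1 (length (h # Hs)) (rev (h # Hs) @ R # rest)
      = e_star_int n 1 ?k (e_star n (Suc ?k) ?S)"
    by (simp add: e_star_int_def)
  also have "\<dots> = rev (insR n Hs (Elow n h R)) @ Eup n h R # rest"
    unfolding es using Cons.IH[OF Hs r1 v2] .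
  finally show ?case by simp
qed

fun chn :: "nat \<Rightarrow> nat set list \<Rightarrow> nat \<Rightarrow> nat set list" where
  "chn n B 0 = []"
| "chn n B (Suc k) = insR n (chn n B k) (B ! k)"

lemma chn_length: "length (chn n B k) = k"
  by (induction k) (auto simp: insR_length)

definition lowest :: "nat \<Rightarrow> nat set list \<Rightarrow> bool" where
  "lowest n B \<longleftrightarrow> allrows n B \<and> (\<forall>k. Suc k < length B \<longrightarrow> valid n (B ! k) (B ! Suc k))"

lemma chn_props:
  assumes "lowest n B" "k < length B"
  shows "allrows n (chn n B k) \<and> vld n (chn n B k) (B ! k) \<and> chainH n (chn n B k)"
  using assms(2)
proof (induction k)
  case 0
  then show ?case by (simp add: allrows_def)
next
  case (Suc k)
  have IH: "allrows n (chn n B k)" "vld n (chn n B k) (B ! k)" "chainH n (chn n B k)" using Suc by auto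
  have r: "rows n (B ! k)" "rows n (B ! Suc k)" using assms(1) Suc.prems unfolding lowest_def allrows_def by auto
  have v: "valid n (B ! k) (B ! Suc k)" using assms(1) Suc.prems unfolding lowest_def by auto
  show ?case using insR_rows[OF IH(1) r(1)] vld_step[OF IH(1) r(1) r(2) IH(2) v] insR_chain[OF IH(1) r(1) IH(3) IH(2)]
    by simp
qed

lemma chn_final:
  assumes "lowest n B" "L = length B" "0 < L"
  shows "allrows n (chn n B L) \<and> chainH n (chn n B L)"
proof -
  obtain k where k: "L = Suc k" using assms(3) by (cases L) auto
  have p: "allrows n (chn n B k) \<and> vld n (chn n B k) (B ! k) \<and> chainH n (chn n B k)"
    using chn_props[OF assms(1)] k assms(2) by simp
  have r: "rows n (B ! k)" using assms k unfolding lowest_def allrows_def by auto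
  show ?thesis using k insR_rows[OF _ r, of "chn n B k"] insR_chain[OF _ r, of "chn n B k"] p by simp
qed

lemma rho_N_chn:
  assumes "lowest n B"
  shows "k \<le> length B \<Longrightarrow> fold (\<lambda>k. e_star_int n 1 k) [0..<k] B = rev (chn n B k) @ drop k B"
proof (induction k)
  case 0
  then show ?case by simp
next
  case (Suc k)
  have p: "allrows n (chn n B k)" "vld n (chn n B k) (B ! k)" using chn_props[OF assms, of k] Suc.prems by auto
  have r: "rows n (B ! k)" using assms Suc.prems unfolding lowest_def allrows_def by auto
  have d: "drop k B = B ! k # drop (Suc k) B" using Suc.prems by (simp add: Cons_nth_drop_Suc)
  have "fold (\<lambda>k. e_star_int n 1 k) [0..<Suc k] B = e_star_int n 1 k (rev (chn n B k) @ drop k B)"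
    using Suc by simp
  also have "\<dots> = rev (chn n B (Suc k)) @ drop (Suc k) B"
    unfolding d using stage_eq[OF p(1) r p(2), of "drop (Suc k) B"] chn_length[of n B k] by simp
  finally show ?case .
qed

lemma rho_N_eq:
  assumes "lowest n B"
  shows "rho_N n B = rev (chn n B (length B))"
proof (cases "length B")
  case 0
  then show ?thesis by (simp add: rho_N_def)
next
  case (Suc L)
  have "[0..<length B] = 0 # [1..<length B]" using Suc by (simp add: upt_conv_Cons)
  then have "rho_N n B = fold (\<lambda>k. e_star_int n 1 k) [0..<length B] B"
    by (simp add: rho_N_def e_star_int_0)
  then show ?thesis using rho_N_chn[OF assms, of "length B"] by simp
qed

lemma chn_card:
  assumes "lowest n B"
  shows "k \<le> length B \<Longrightarrow> map card (chn n B k) = map card (take k B)"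
proof (induction k)
  case 0
  then show ?case by simp
next
  case (Suc k)
  have p: "allrows n (chn n B k)" "vld n (chn n B k) (B ! k)" using chn_props[OF assms, of k] Suc.prems by auto
  have r: "rows n (B ! k)" using assms Suc.prems unfolding lowest_def allrows_def by auto
  show ?case using insR_card[OF p(1) r p(2)] Suc by (simp add: take_Suc_conv_app_nth)
qed

lemma chn_col:
  assumes "lowest n B"
  shows "k \<le> length B \<Longrightarrow> length (filter (\<lambda>X. j \<in> X) (chn n B k)) = length (filter (\<lambda>X. j \<in> X) (take k B))"
proof (induction k)
  case 0
  then show ?case by simp
next
  case (Suc k)
  have p: "allrows n (chn n B k)" using chn_props[OF assms, of k] Suc.prems by auto
  have r: "rows n (B ! k)" using assms Suc.prems unfolding lowest_def allrows_def by auto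
  show ?case using insR_col[OF p r] Suc by (simp add: take_Suc_conv_app_nth)
qed

lemma chn_inj:
  assumes "lowest n B" "lowest n B'"
  shows "k \<le> length B \<Longrightarrow> k \<le> length B' \<Longrightarrow> chn n B k = chn n B' k \<Longrightarrow> take k B = take k B'"
proof (induction k)
  case 0
  then show ?case by simp
next
  case (Suc k)
  have p: "allrows n (chn n B k)" "vld n (chn n B k) (B ! k)" using chn_props[OF assms(1), of k] Suc.prems by auto
  have p': "allrows n (chn n B' k)" "vld n (chn n B' k) (B' ! k)" using chn_props[OF assms(2), of k] Suc.prems by auto
  have r: "rows n (B ! k)" using assms Suc.prems unfolding lowest_def allrows_def by auto
  have r': "rows n (B' ! k)" using assms Suc.prems unfolding lowest_def allrows_def by auto
  have "chn n B k = chn n B' k \<and> B ! k = B' ! k"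
    using insR_inj[OF p(1) r p(2) p'(1) r' p'(2)] Suc.prems chn_length by simp
  then show ?case using Suc by (simp add: take_Suc_conv_app_nth)
qed



definition hall :: "nat set \<Rightarrow> nat set \<Rightarrow> bool" where
  "hall T A \<longleftrightarrow> (\<forall>s. card {c\<in>T. s \<le> c} \<le> card {d\<in>A. s \<le> d})"

lemma nb_props:
  assumes "finite A" "A \<noteq> {}"
  shows "next_ball A c \<in> A" "{d\<in>A. c \<le> d} \<noteq> {} \<Longrightarrow> c \<le> next_ball A c \<and> (\<forall>x\<in>A. c \<le> x \<longrightarrow> next_ball A c \<le> x)"
proof -
  show "next_ball A c \<in> A"
  proof (cases "{d\<in>A. c \<le> d} \<noteq> {}")
    case True
    then have "Min {d\<in>A. c \<le> d} \<in> {d\<in>A. c \<le> d}" using assms by (intro Min_in) auto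
    then show ?thesis using True by (simp add: next_ball_def)
  next
    case False
    then show ?thesis using assms by (simp add: next_ball_def)
  qed
  assume ne: "{d\<in>A. c \<le> d} \<noteq> {}"
  have fin: "finite {d\<in>A. c \<le> d}" using assms by simp
  have "Min {d\<in>A. c \<le> d} \<in> {d\<in>A. c \<le> d}" using ne fin by (intro Min_in) auto
  moreover have "\<forall>x\<in>A. c \<le> x \<longrightarrow> Min {d\<in>A. c \<le> d} \<le> x" using fin by auto
  ultimately show "c \<le> next_ball A c \<and> (\<forall>x\<in>A. c \<le> x \<longrightarrow> next_ball A c \<le> x)"
    using ne by (simp add: next_ball_def)
qed

lemma pr_mono: "m \<le> snd (pair_row r xs A lab m)"
proof (induction xs arbitrary: A lab m)
  case Nil
  then show ?case by simp
next
  case (Cons x xs)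
  obtain c l where x: "x = (c, l)" by (cases x)
  show ?case unfolding x using Cons.IH
    by (simp add: Let_def) (meson le_add1 order_trans)
qed

lemma pr_labels: "fst (pair_row r xs A lab m) c = Some l \<Longrightarrow> lab c = Some l \<or> l \<in> snd ` set xs"
proof (induction xs arbitrary: A lab m)
  case Nil
  then show ?case by simp
next
  case (Cons x xs)
  obtain c0 l0 where x: "x = (c0, l0)" by (cases x)
  let ?d = "next_ball A c0"
  obtain A' m' where "fst (pair_row r xs A' (lab(?d \<mapsto> l0)) m') c = Some l"
    using Cons.prems unfolding x by (simp add: Let_def)
  then have "(lab(?d \<mapsto> l0)) c = Some l \<or> l \<in> snd ` set xs"
    using Cons.IH by blast
  then show ?case unfolding x by (cases "c = ?d") auto
qed

lemma card_filter_ge_pos: "finite T \<Longrightarrow> (c::nat) \<in> T \<Longrightarrow> 0 < card {x\<in>T. c \<le> x}"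
proof -
  assume a: "finite T" "c \<in> T"
  then have "c \<in> {x\<in>T. c \<le> x}" by simp
  then have "{x\<in>T. c \<le> x} \<noteq> {}" by blast
  then show ?thesis using a by (simp add: card_gt_0_iff)
qed

lemma pr_nowrap:
  "finite A \<Longrightarrow> distinct (map fst xs) \<Longrightarrow> hall (set (map fst xs)) A \<Longrightarrow> snd (pair_row r xs A lab m) = m"
proof (induction xs arbitrary: A lab m)
  case Nil
  then show ?case by simp
next
  case (Cons x xs)
  obtain c l where x: "x = (c, l)" by (cases x)
  let ?T = "set (map fst (x # xs))"
  let ?T' = "set (map fst xs)"
  let ?d = "next_ball A c"
  have cT: "c \<in> ?T" "c \<notin> ?T'" using Cons.prems(2) x by auto
  have "0 < card {x\<in>?T. c \<le> x}" using cT by (intro card_filter_ge_pos) auto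
  also have "card {x\<in>?T. c \<le> x} \<le> card {d\<in>A. c \<le> d}" using Cons.prems(3) unfolding hall_def by blast
  finally have ne: "{d\<in>A. c \<le> d} \<noteq> {}" by (metis card.empty less_irrefl)
  then have Ane: "A \<noteq> {}" by auto
  have dA: "?d \<in> A" using nb_props(1)[OF Cons.prems(1) Ane] .
  have dc: "c \<le> ?d" and dmin: "\<forall>y\<in>A. c \<le> y \<longrightarrow> ?d \<le> y" using nb_props(2)[OF Cons.prems(1) Ane ne] by auto
  have h': "hall ?T' (A - {?d})" unfolding hall_def
  proof
    fix s
    have finT: "finite {y\<in>?T. s \<le> y}" "finite {y\<in>A. s \<le> y}" using Cons.prems(1) by auto
    have hs: "card {y\<in>?T. s \<le> y} \<le> card {y\<in>A. s \<le> y}" using Cons.prems(3) unfolding hall_def by blast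
    have hc: "card {y\<in>?T. c \<le> y} \<le> card {y\<in>A. c \<le> y}" using Cons.prems(3) unfolding hall_def by blast
    show "card {y\<in>?T'. s \<le> y} \<le> card {y\<in>A - {?d}. s \<le> y}"
    proof (cases "s \<le> c")
      case True
      have "{y\<in>?T'. s \<le> y} = {y\<in>?T. s \<le> y} - {c}" using cT x by auto
      then have a: "card {y\<in>?T'. s \<le> y} = card {y\<in>?T. s \<le> y} - 1" using True cT finT by (simp add: card_Diff_singleton)
      have "{y\<in>A - {?d}. s \<le> y} = {y\<in>A. s \<le> y} - {?d}" by auto
      then have b: "card {y\<in>A - {?d}. s \<le> y} = card {y\<in>A. s \<le> y} - 1" using True dA dc finT by (simp add: card_Diff_singleton)
      show ?thesis using a b hs by linarith
    next
      case False
      show ?thesis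
      proof (cases "?d < s")
        case True
        have "{y\<in>?T'. s \<le> y} \<subseteq> {y\<in>?T. s \<le> y}" by auto
        then have "card {y\<in>?T'. s \<le> y} \<le> card {y\<in>?T. s \<le> y}" using finT by (intro card_mono) auto
        moreover have "{y\<in>A - {?d}. s \<le> y} = {y\<in>A. s \<le> y}" using True by auto
        ultimately show ?thesis using hs by simp
      next
        case F2: False
        have "{y\<in>?T'. s \<le> y} \<subseteq> {y\<in>?T. c \<le> y} - {c}" using False cT by auto
        then have "card {y\<in>?T'. s \<le> y} \<le> card ({y\<in>?T. c \<le> y} - {c})" by (intro card_mono) auto
        also have "\<dots> = card {y\<in>?T. c \<le> y} - 1" using cT by (simp add: card_Diff_singleton)
        finally have a: "card {y\<in>?T'. s \<le> y} \<le> card {y\<in>?T. c \<le> y} - 1" .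
        have "{y\<in>A - {?d}. s \<le> y} = {y\<in>A. c \<le> y} - {?d}" using False F2 dmin by force
        then have b: "card {y\<in>A - {?d}. s \<le> y} = card {y\<in>A. c \<le> y} - 1"
          using dA dc Cons.prems(1) by (simp add: card_Diff_singleton)
        show ?thesis using a b hc by linarith
      qed
    qed
  qed
  have "snd (pair_row r xs (A - {?d}) (lab(?d \<mapsto> l)) m) = m"
    using Cons.IH[of "A - {?d}"] Cons.prems h' by auto
  then show ?case unfolding x using dc by (simp add: Let_def)
qed

lemma pr_wrap:
  "finite A \<Longrightarrow> distinct (map fst xs) \<Longrightarrow> length xs \<le> card A \<Longrightarrow> (\<forall>x\<in>set xs. r \<le> snd x) \<Longrightarrow>
   snd (pair_row r xs A lab m) = m \<Longrightarrow> hall (set (map fst xs)) A"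
proof (induction xs arbitrary: A lab m)
  case Nil
  then show ?case by (simp add: hall_def)
next
  case (Cons x xs)
  obtain c l where x: "x = (c, l)" by (cases x)
  let ?T = "set (map fst (x # xs))"
  let ?T' = "set (map fst xs)"
  let ?d = "next_ball A c"
  have cT: "c \<in> ?T" "c \<notin> ?T'" using Cons.prems(2) x by auto
  have Ane: "A \<noteq> {}" using Cons.prems(3) by auto
  have dA: "?d \<in> A" using nb_props(1)[OF Cons.prems(1) Ane] .
  have lr: "r \<le> l" using Cons.prems(4) x by auto
  let ?w = "if ?d < c then l + 1 - r else 0"
  have eq: "snd (pair_row r xs (A - {?d}) (lab(?d \<mapsto> l)) (m + ?w)) = m"
    using Cons.prems(5) unfolding x by (simp add: Let_def)
  have "m + ?w \<le> m" using pr_mono[of "m + ?w" r xs "A - {?d}" "lab(?d \<mapsto> l)"] eq by simp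
  then have dc: "c \<le> ?d" using lr by (auto split: if_splits)
  have fA': "finite (A - {?d})" using Cons.prems(1) by simp
  have dxs: "distinct (map fst xs)" using Cons.prems(2) by simp
  have cl: "length xs \<le> card (A - {?d})" using Cons.prems(1,3) dA by (simp add: card_Diff_singleton)
  have lb: "\<forall>x\<in>set xs. r \<le> snd x" using Cons.prems(4) by simp
  have eq2: "snd (pair_row r xs (A - {?d}) (lab(?d \<mapsto> l)) (m + ?w)) = m + ?w" using eq dc by simp
  have h': "hall ?T' (A - {?d})"
    using Cons.IH[OF fA' dxs cl lb eq2] .
  show ?case unfolding hall_def
  proof
    fix s
    have finT: "finite {y\<in>?T'. s \<le> y}" "finite {y\<in>A. s \<le> y}" using Cons.prems(1) by auto
    have hs: "card {y\<in>?T'. s \<le> y} \<le> card {y\<in>A - {?d}. s \<le> y}" using h' unfolding hall_def by blast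
    show "card {y\<in>?T. s \<le> y} \<le> card {y\<in>A. s \<le> y}"
    proof (cases "s \<le> c")
      case True
      have "{y\<in>?T. s \<le> y} = insert c {y\<in>?T'. s \<le> y}" using True x by auto
      then have a: "card {y\<in>?T. s \<le> y} = Suc (card {y\<in>?T'. s \<le> y})" using cT finT by simp
      have "{y\<in>A - {?d}. s \<le> y} = {y\<in>A. s \<le> y} - {?d}" by auto
      then have b: "card {y\<in>A - {?d}. s \<le> y} = card {y\<in>A. s \<le> y} - 1"
        using True dA dc finT by (simp add: card_Diff_singleton)
      have "0 < card {y\<in>A. s \<le> y}" using True dA dc finT by (subst card_gt_0_iff) auto
      then show ?thesis using a b hs by linarith
    next
      case False
      have "{y\<in>?T. s \<le> y} = {y\<in>?T'. s \<le> y}" using False x by auto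
      moreover have "card {y\<in>A - {?d}. s \<le> y} \<le> card {y\<in>A. s \<le> y}" using finT by (intro card_mono) auto
      ultimately show ?thesis using hs by simp
    qed
  qed
qed

lemma balls_props:
  assumes "finite S"
  shows "distinct (sort_key f (sorted_list_of_set S)) \<and> set (sort_key f (sorted_list_of_set S)) = S
    \<and> length (sort_key f (sorted_list_of_set S)) = card S"
  using assms by (simp add: distinct_sort)

lemma mf_iff:
  "Suc k \<le> length B \<Longrightarrow> (\<forall>j\<le>k. finite (B ! j)) \<Longrightarrow> (\<forall>j<k. card (B ! Suc j) \<le> card (B ! j)) \<Longrightarrow>
   (\<forall>c l. lab c = Some l \<longrightarrow> Suc k \<le> l) \<Longrightarrow>
   (maj_from B (Suc k) lab = 0 \<longleftrightarrow> (\<forall>j<k. hall (B ! Suc j) (B ! j)))"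
proof (induction k arbitrary: lab)
  case 0
  then show ?case by simp
next
  case (Suc k)
  define r where "r = Suc (Suc k)"
  define lab' where "lab' = (\<lambda>c. case lab c of Some l \<Rightarrow> l | None \<Rightarrow> r)"
  define balls where "balls = sort_key (\<lambda>c. (- int (lab' c), c)) (sorted_list_of_set (B ! Suc k))"
  define xs where "xs = map (\<lambda>c. (c, lab' c)) balls"
  define res where "res = pair_row r xs (B ! k) Map.empty 0"
  have mf: "maj_from B (Suc (Suc k)) lab = snd res + maj_from B (Suc k) (fst res)"
    unfolding res_def xs_def balls_def lab'_def r_def by (simp add: Let_def)
  have fin: "finite (B ! Suc k)" "finite (B ! k)" using Suc.prems(2) by auto
  have bp: "distinct balls" "set balls = B ! Suc k" "length balls = card (B ! Suc k)"
    using balls_props[OF fin(1)] unfolding balls_def by auto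
  have mfx: "map fst xs = balls" unfolding xs_def by (simp add: comp_def)
  have labge: "\<forall>x\<in>set xs. r \<le> snd x"
  proof
    fix x assume "x \<in> set xs"
    then obtain c where "x = (c, lab' c)" unfolding xs_def by auto
    then show "r \<le> snd x" using Suc.prems(4) unfolding lab'_def r_def by (auto split: option.splits)
  qed
  have cardle: "length xs \<le> card (B ! k)" using bp Suc.prems(3) unfolding xs_def by simp
  have sres: "snd res = 0 \<longleftrightarrow> hall (B ! Suc k) (B ! k)"
  proof
    assume "snd res = 0"
    then have "hall (set (map fst xs)) (B ! k)"
      using pr_wrap[OF fin(2) _ cardle labge] mfx bp unfolding res_def by simp
    then show "hall (B ! Suc k) (B ! k)" using mfx bp by simp
  next
    assume "hall (B ! Suc k) (B ! k)"
    then have h: "hall (set (map fst xs)) (B ! k)" using mfx bp by simp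
    have d: "distinct (map fst xs)" using mfx bp by simp
    show "snd res = 0" using pr_nowrap[OF fin(2) d h] unfolding res_def by simp
  qed
  have lab2: "\<forall>c l. fst res c = Some l \<longrightarrow> Suc k \<le> l"
  proof (intro allI impI)
    fix c l assume "fst res c = Some l"
    then have "l \<in> snd ` set xs" using pr_labels unfolding res_def by fastforce
    then show "Suc k \<le> l" using labge r_def by auto
  qed
  have IH: "maj_from B (Suc k) (fst res) = 0 \<longleftrightarrow> (\<forall>j<k. hall (B ! Suc j) (B ! j))"
    using Suc.IH[OF _ _ _ lab2] Suc.prems by auto
  have "(\<forall>j<Suc k. hall (B ! Suc j) (B ! j)) \<longleftrightarrow> hall (B ! Suc k) (B ! k) \<and> (\<forall>j<k. hall (B ! Suc j) (B ! j))"
    using less_Suc_eq by auto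
  then show ?case using mf sres IH by simp
qed

lemma nonwrapping_iff:
  assumes "\<forall>j<length B. finite (B ! j)" "\<forall>j. Suc j < length B \<longrightarrow> card (B ! Suc j) \<le> card (B ! j)"
  shows "nonwrapping B \<longleftrightarrow> (\<forall>j. Suc j < length B \<longrightarrow> hall (B ! Suc j) (B ! j))"
proof (cases "length B")
  case 0
  then show ?thesis by (simp add: nonwrapping_def maj_def)
next
  case (Suc k)
  have "maj_from B (Suc k) Map.empty = 0 \<longleftrightarrow> (\<forall>j<k. hall (B ! Suc j) (B ! j))"
    using mf_iff[of k B Map.empty] assms Suc by auto
  then show ?thesis unfolding nonwrapping_def maj_def using Suc by auto
qed

lemma card_ge_pcI:
  assumes "finite X" "1 \<le> s"
  shows "int (card {c\<in>X. s \<le> c}) = int (card X) - pcI X (s - 1)"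
proof -
  have "{c\<in>X. s \<le> c} = X - {c\<in>X. c \<le> s - 1}" using assms(2) by auto
  moreover have "card (X - {c\<in>X. c \<le> s - 1}) = card X - card {c\<in>X. c \<le> s - 1}"
    using assms(1) by (intro card_Diff_subset) auto
  moreover have "card {c\<in>X. c \<le> s - 1} \<le> card X" using assms(1) by (intro card_mono) auto
  ultimately show ?thesis unfolding pcI_def by simp
qed

lemma hall_sdom:
  assumes A: "rows n A" and T: "rows n T"
  shows "hall T A \<longleftrightarrow> sdom n A T"
proof
  have fA: "finite A" and fT: "finite T" using A T finite_subset by auto
  assume h: "hall T A"
  show "sdom n A T" unfolding sdom_def
  proof (intro allI impI)
    fix t assume "t \<le> n"
    have "card {c\<in>T. Suc t \<le> c} \<le> card {c\<in>A. Suc t \<le> c}" using h unfolding hall_def by blast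
    then show "int (card T) - int (card A) \<le> pcI T t - pcI A t"
      using card_ge_pcI[OF fA, of "Suc t"] card_ge_pcI[OF fT, of "Suc t"] by simp
  qed
next
  have fA: "finite A" and fT: "finite T" using A T finite_subset by auto
  assume s: "sdom n A T"
  show "hall T A" unfolding hall_def
  proof
    fix s0
    show "card {c\<in>T. s0 \<le> c} \<le> card {c\<in>A. s0 \<le> c}"
    proof (cases "s0 \<le> Suc n")
      case True
      define s1 where "s1 = max s0 1"
      have e: "{c\<in>T. s0 \<le> c} = {c\<in>T. s1 \<le> c}" "{c\<in>A. s0 \<le> c} = {c\<in>A. s1 \<le> c}"
        using A T unfolding s1_def by auto
      have "s1 - 1 \<le> n" "1 \<le> s1" using True unfolding s1_def by auto
      then have "int (card T) - int (card A) \<le> pcI T (s1 - 1) - pcI A (s1 - 1)" using s unfolding sdom_def by blast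
      then show ?thesis unfolding e using card_ge_pcI[OF fA \<open>1 \<le> s1\<close>] card_ge_pcI[OF fT \<open>1 \<le> s1\<close>] by simp
    next
      case False
      then have e: "{c\<in>T. s0 \<le> c} = {}" using T by auto
      have "card {c\<in>T. s0 \<le> c} = 0" by (metis e card.empty)
      then show ?thesis by simp
    qed
  qed
qed



lemma conj_part_mono: "conj_part lam (Suc r) \<le> conj_part lam r"
  unfolding conj_part_def by (induction lam) auto

lemma col_count_filter: "col_count B j = length (filter (\<lambda>S. j \<in> S) B)"
proof -
  have "{r \<in> {1..length B}. j \<in> B ! (r - 1)} = Suc ` {k. k < length B \<and> j \<in> B ! k}"
  proof (rule set_eqI)
    fix r
    show "r \<in> {r \<in> {1..length B}. j \<in> B ! (r - 1)} \<longleftrightarrow> r \<in> Suc ` {k. k < length B \<and> j \<in> B ! k}"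
      by (cases r) auto
  qed
  then have "col_count B j = card {k. k < length B \<and> j \<in> B ! k}"
    unfolding col_count_def by (simp add: card_image)
  then show ?thesis by (simp add: length_filter_conv_card)
qed

lemma MLQ0_iff:
  "B \<in> MLQ0 lam alpha \<longleftrightarrow> length B = first_part lam \<and> allrows (length alpha) B
    \<and> (\<forall>k<length B. card (B ! k) = conj_part lam (Suc k))
    \<and> (\<forall>j. Suc j < length B \<longrightarrow> hall (B ! Suc j) (B ! j))
    \<and> (\<forall>j\<in>{1..length alpha}. length (filter (\<lambda>S. j \<in> S) B) = alpha ! (j - 1))"
  (is "?L \<longleftrightarrow> ?R")
proof -
  let ?n = "length alpha"
  have rowconv: "(\<forall>r \<in> {1..length B}. B ! (r - 1) \<subseteq> {1..?n} \<and> card (B ! (r - 1)) = conj_part lam r)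
     \<longleftrightarrow> allrows ?n B \<and> (\<forall>k<length B. card (B ! k) = conj_part lam (Suc k))"
  proof
    assume a: "\<forall>r \<in> {1..length B}. B ! (r - 1) \<subseteq> {1..?n} \<and> card (B ! (r - 1)) = conj_part lam r"
    have "\<forall>k<length B. B ! k \<subseteq> {1..?n} \<and> card (B ! k) = conj_part lam (Suc k)"
    proof (intro allI impI)
      fix k assume "k < length B"
      then show "B ! k \<subseteq> {1..?n} \<and> card (B ! k) = conj_part lam (Suc k)" using a[rule_format, of "Suc k"] by auto
    qed
    moreover have "allrows ?n B" unfolding allrows_def
    proof
      fix X assume "X \<in> set B"
      then obtain k where "k < length B" "X = B ! k" by (auto simp: in_set_conv_nth)
      then show "X \<subseteq> {1..?n}" using calculation by auto
    qed
    ultimately show "allrows ?n B \<and> (\<forall>k<length B. card (B ! k) = conj_part lam (Suc k))" by auto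
  next
    assume a: "allrows ?n B \<and> (\<forall>k<length B. card (B ! k) = conj_part lam (Suc k))"
    show "\<forall>r \<in> {1..length B}. B ! (r - 1) \<subseteq> {1..?n} \<and> card (B ! (r - 1)) = conj_part lam r"
    proof
      fix r assume r: "r \<in> {1..length B}"
      then have "r - 1 < length B" "Suc (r - 1) = r" by auto
      then show "B ! (r - 1) \<subseteq> {1..?n} \<and> card (B ! (r - 1)) = conj_part lam r"
        using a unfolding allrows_def by (metis nth_mem)
    qed
  qed
  have nw: "allrows ?n B \<Longrightarrow> (\<forall>k<length B. card (B ! k) = conj_part lam (Suc k)) \<Longrightarrow>
      nonwrapping B \<longleftrightarrow> (\<forall>j. Suc j < length B \<longrightarrow> hall (B ! Suc j) (B ! j))"
  proof -
    assume a: "allrows ?n B" "\<forall>k<length B. card (B ! k) = conj_part lam (Suc k)"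
    have f: "\<forall>j<length B. finite (B ! j)" using a(1) unfolding allrows_def
      by (meson finite_atLeastAtMost finite_subset nth_mem)
    have c: "\<forall>j. Suc j < length B \<longrightarrow> card (B ! Suc j) \<le> card (B ! j)"
      using a(2) conj_part_mono by (metis Suc_lessD)
    show ?thesis using nonwrapping_iff[OF f c] .
  qed
  show ?thesis unfolding MLQ0_def mem_Collect_eq rowconv col_count_filter using nw by blast
qed

definition rfl2 :: "nat \<Rightarrow> nat set \<Rightarrow> nat set" where
  "rfl2 n S = (\<lambda>c. Suc n - c) ` S"

lemma rot2_refl: "rot2 n B = rev (map (rfl2 n) B)"
  by (simp add: rot2_def rfl2_def)

lemma refl_inj: "inj_on (\<lambda>c. Suc n - c) {1..n}"
  by (auto simp: inj_on_def)

lemma refl_rows: "S \<subseteq> {1..n} \<Longrightarrow> rfl2 n S \<subseteq> {1..n}"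
proof
  fix x assume a: "S \<subseteq> {1..n}" "x \<in> rfl2 n S"
  then obtain c where "c \<in> S" "x = Suc n - c" unfolding rfl2_def by auto
  moreover have "c \<in> {1..n}" using calculation a by auto
  ultimately show "x \<in> {1..n}" by auto
qed

lemma refl_card: "S \<subseteq> {1..n} \<Longrightarrow> card (rfl2 n S) = card S"
  unfolding rfl2_def by (rule card_image) (rule inj_on_subset[OF refl_inj])

lemma refl_refl: "S \<subseteq> {1..n} \<Longrightarrow> rfl2 n (rfl2 n S) = S"
proof -
  assume a: "S \<subseteq> {1..n}"
  have "rfl2 n (rfl2 n S) = (\<lambda>c. Suc n - (Suc n - c)) ` S" unfolding rfl2_def by (simp add: image_image)
  also have "\<dots> = (\<lambda>c. c) ` S" using a by (intro image_cong) auto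
  finally show ?thesis by simp
qed

lemma refl_mem: "j \<in> {1..n} \<Longrightarrow> S \<subseteq> {1..n} \<Longrightarrow> (j \<in> rfl2 n S \<longleftrightarrow> Suc n - j \<in> S)"
proof
  assume a: "j \<in> {1..n}" "S \<subseteq> {1..n}" "j \<in> rfl2 n S"
  then obtain c where "c \<in> S" "j = Suc n - c" unfolding rfl2_def by auto
  moreover have "c \<in> {1..n}" using calculation a by auto
  ultimately show "Suc n - j \<in> S" by simp
next
  assume a: "j \<in> {1..n}" "S \<subseteq> {1..n}" "Suc n - j \<in> S"
  then have "Suc n - (Suc n - j) = j" by auto
  then show "j \<in> rfl2 n S" using a(3) unfolding rfl2_def by force
qed

lemma pcI_refl:
  assumes "S \<subseteq> {1..n}" "t \<le> n"
  shows "pcI (rfl2 n S) t = int (card {c\<in>S. Suc n - t \<le> c})"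
proof -
  have "{c \<in> rfl2 n S. c \<le> t} = (\<lambda>c. Suc n - c) ` {c\<in>S. Suc n - t \<le> c}"
  proof (rule set_eqI)
    fix x
    show "x \<in> {c \<in> rfl2 n S. c \<le> t} \<longleftrightarrow> x \<in> (\<lambda>c. Suc n - c) ` {c\<in>S. Suc n - t \<le> c}"
    proof
      assume "x \<in> {c \<in> rfl2 n S. c \<le> t}"
      then obtain c where c: "c \<in> S" "x = Suc n - c" "x \<le> t" unfolding rfl2_def by auto
      then have "c \<in> {1..n}" using assms by auto
      then show "x \<in> (\<lambda>c. Suc n - c) ` {c\<in>S. Suc n - t \<le> c}" using c by auto
    next
      assume "x \<in> (\<lambda>c. Suc n - c) ` {c\<in>S. Suc n - t \<le> c}"
      then obtain c where c: "c \<in> S" "x = Suc n - c" "Suc n - t \<le> c" by auto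
      then have "c \<in> {1..n}" using assms by auto
      then show "x \<in> {c \<in> rfl2 n S. c \<le> t}" using c assms unfolding rfl2_def by auto
    qed
  qed
  moreover have "card ((\<lambda>c. Suc n - c) ` {c\<in>S. Suc n - t \<le> c}) = card {c\<in>S. Suc n - t \<le> c}"
    by (rule card_image, rule inj_on_subset[OF refl_inj]) (use assms in auto)
  ultimately show ?thesis unfolding pcI_def by simp
qed

lemma allrows_nth: "allrows n B \<Longrightarrow> k < length B \<Longrightarrow> B ! k \<subseteq> {1..n}"
  unfolding allrows_def by auto

lemma rot2_allrows: "allrows n B \<Longrightarrow> allrows n (rot2 n B)"
  unfolding allrows_def rot2_refl using refl_rows by auto

lemma rot2_rot2: "allrows n B \<Longrightarrow> rot2 n (rot2 n B) = B"
proof -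
  assume a: "allrows n B"
  have "map (rfl2 n) (map (rfl2 n) B) = B"
    by (rule nth_equalityI) (use a in \<open>auto simp: allrows_def refl_refl\<close>)
  then show ?thesis unfolding rot2_refl by (simp add: rev_map)
qed

lemma lowest_rot2:
  assumes a: "allrows n B" and h: "\<forall>j. Suc j < length B \<longrightarrow> hall (B ! Suc j) (B ! j)"
  shows "lowest n (rot2 n B)"
  unfolding lowest_def
proof (intro conjI allI impI)
  show "allrows n (rot2 n B)" using rot2_allrows[OF a] .
  fix k assume k: "Suc k < length (rot2 n B)"
  let ?L = "length B"
  define j where "j = ?L - Suc (Suc k)"
  have L: "Suc k < ?L" using k by (simp add: rot2_refl)
  have e: "rot2 n B ! k = rfl2 n (B ! Suc j)" "rot2 n B ! Suc k = rfl2 n (B ! j)"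
    using L unfolding rot2_refl j_def by (auto simp: rev_nth Suc_diff_Suc)
  have r: "B ! Suc j \<subseteq> {1..n}" "B ! j \<subseteq> {1..n}" using a L unfolding allrows_def j_def by auto
  have hj: "hall (B ! Suc j) (B ! j)" using h L unfolding j_def by auto
  show "valid n (rot2 n B ! k) (rot2 n B ! Suc k)" unfolding valid_def e
  proof (intro allI impI)
    fix t assume t: "t \<le> n"
    show "pcI (rfl2 n (B ! Suc j)) t \<le> pcI (rfl2 n (B ! j)) t"
      using pcI_refl[OF r(1) t] pcI_refl[OF r(2) t] hj unfolding hall_def by simp
  qed
qed

lemma chainH_nth: "chainH n xs \<Longrightarrow> Suc i < length xs \<Longrightarrow> sdom n (xs ! Suc i) (xs ! i)"
proof (induction n xs arbitrary: i rule: chainH.induct)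
  case (1 n a b xs)
  then show ?case by (cases i) auto
qed auto

lemma key:
  assumes B: "B \<in> MLQ0 lam alpha"
  shows "rho_up (length alpha) B \<in> MLQ0 lam (rev alpha)"
proof -
  let ?n = "length alpha"
  let ?L = "length B"
  have Bp: "length B = first_part lam" "allrows ?n B" "\<forall>k<?L. card (B ! k) = conj_part lam (Suc k)"
    "\<forall>j. Suc j < ?L \<longrightarrow> hall (B ! Suc j) (B ! j)"
    "\<forall>j\<in>{1..?n}. length (filter (\<lambda>S. j \<in> S) B) = alpha ! (j - 1)"
    using B unfolding MLQ0_iff by auto
  let ?B0 = "rot2 ?n B"
  have low: "lowest ?n ?B0" using lowest_rot2[OF Bp(2) Bp(4)] .
  have lB0: "length ?B0 = ?L" by (simp add: rot2_refl)
  have F: "rho_up ?n B = rev (chn ?n ?B0 ?L)" unfolding rho_up_def using rho_N_eq[OF low] lB0 by simp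
  let ?F = "rho_up ?n B"
  have lF: "length ?F = ?L" using F chn_length by simp
  have cardF: "map card ?F = map card B"
  proof -
    have "map card (chn ?n ?B0 ?L) = map card ?B0" using chn_card[OF low, of ?L] lB0 by simp
    also have "\<dots> = rev (map card B)"
      unfolding rot2_refl rev_map[symmetric] map_map
      using Bp(2) refl_card by (auto simp: allrows_def intro!: map_cong)
    finally show ?thesis using F by (metis rev_map rev_rev_ident)
  qed
  show ?thesis unfolding MLQ0_iff length_rev
  proof (intro conjI)
    show "length ?F = first_part lam" using lF Bp(1) by simp
    show rF: "allrows ?n ?F"
    proof (cases "?L = 0")
      case True
      then show ?thesis using lF by (simp add: allrows_def)
    next
      case False
      then show ?thesis using chn_final[OF low lB0[symmetric]] F by (simp add: allrows_def)
    qed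
    show "\<forall>k<length ?F. card (?F ! k) = conj_part lam (Suc k)"
    proof (intro allI impI)
      fix k assume "k < length ?F"
      then have "card (?F ! k) = card (B ! k)" using cardF lF by (metis length_map nth_map)
      then show "card (?F ! k) = conj_part lam (Suc k)" using Bp(3) \<open>k < length ?F\<close> lF by simp
    qed
    show "\<forall>j. Suc j < length ?F \<longrightarrow> hall (?F ! Suc j) (?F ! j)"
    proof (intro allI impI)
      fix j assume j: "Suc j < length ?F"
      then have L0: "0 < ?L" using lF by linarith
      have ch: "chainH ?n (chn ?n ?B0 ?L)" using chn_final[OF low lB0[symmetric] L0] by simp
      define i where "i = ?L - Suc (Suc j)"
      have e: "?F ! j = chn ?n ?B0 ?L ! Suc i" "?F ! Suc j = chn ?n ?B0 ?L ! i"
        using j lF unfolding F i_def by (auto simp: rev_nth chn_length Suc_diff_Suc)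
      have "sdom ?n (?F ! j) (?F ! Suc j)" unfolding e
        by (rule chainH_nth[OF ch]) (use j lF in \<open>simp add: chn_length i_def\<close>)
      moreover have "rows ?n (?F ! j)" "rows ?n (?F ! Suc j)" using rF j by (auto simp: allrows_def)
      ultimately show "hall (?F ! Suc j) (?F ! j)" using hall_sdom by blast
    qed
    show "\<forall>j\<in>{1..?n}. length (filter (\<lambda>S. j \<in> S) ?F) = rev alpha ! (j - 1)"
    proof
      fix j assume j: "j \<in> {1..?n}"
      have "length (filter (\<lambda>S. j \<in> S) ?F) = length (filter (\<lambda>S. j \<in> S) (chn ?n ?B0 ?L))"
        using F by (simp add: rev_filter[symmetric])
      also have "\<dots> = length (filter (\<lambda>S. j \<in> S) ?B0)" using chn_col[OF low, of ?L j] lB0 by simp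
      also have "\<dots> = length (filter (\<lambda>S. j \<in> rfl2 ?n S) B)"
        by (simp add: rot2_refl comp_def rev_filter[symmetric] filter_map)
      also have "\<dots> = length (filter (\<lambda>S. Suc ?n - j \<in> S) B)"
      proof -
        have "filter (\<lambda>S. j \<in> rfl2 ?n S) B = filter (\<lambda>S. Suc ?n - j \<in> S) B"
          using Bp(2) refl_mem[OF j] unfolding allrows_def by (intro filter_cong) auto
        then show ?thesis by simp
      qed
      also have "\<dots> = alpha ! (Suc ?n - j - 1)"
      proof -
        have "Suc ?n - j \<in> {1..?n}" using j by auto
        then show ?thesis using Bp(5) by blast
      qed
      also have "\<dots> = rev alpha ! (j - 1)" using j rev_nth[of "j - 1" alpha] by auto
      finally show "length (filter (\<lambda>S. j \<in> S) ?F) = rev alpha ! (j - 1)" .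
    qed
  qed
qed

lemma key_inj: "inj_on (rho_up (length alpha)) (MLQ0 lam alpha)"
proof (rule inj_onI)
  let ?n = "length alpha"
  fix B B' assume B: "B \<in> MLQ0 lam alpha" and B': "B' \<in> MLQ0 lam alpha" and e: "rho_up ?n B = rho_up ?n B'"
  have Bp: "length B = first_part lam" "allrows ?n B" "\<forall>j. Suc j < length B \<longrightarrow> hall (B ! Suc j) (B ! j)"
    using B unfolding MLQ0_iff by auto
  have Bp': "length B' = first_part lam" "allrows ?n B'" "\<forall>j. Suc j < length B' \<longrightarrow> hall (B' ! Suc j) (B' ! j)"
    using B' unfolding MLQ0_iff by auto
  let ?L = "length B"
  have low: "lowest ?n (rot2 ?n B)" using lowest_rot2[OF Bp(2) Bp(3)] .
  have low': "lowest ?n (rot2 ?n B')" using lowest_rot2[OF Bp'(2) Bp'(3)] .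
  have l: "length (rot2 ?n B) = ?L" "length (rot2 ?n B') = ?L" using Bp Bp' by (auto simp: rot2_refl)
  have "rev (chn ?n (rot2 ?n B) ?L) = rev (chn ?n (rot2 ?n B') ?L)"
    using e rho_N_eq[OF low] rho_N_eq[OF low'] l unfolding rho_up_def by simp
  then have "take ?L (rot2 ?n B) = take ?L (rot2 ?n B')"
    using chn_inj[OF low low', of ?L] l by simp
  then have "rot2 ?n B = rot2 ?n B'" using l by simp
  then show "B = B'" using rot2_rot2[OF Bp(2)] rot2_rot2[OF Bp'(2)] by metis
qed

lemma MLQ0_finite: "finite (MLQ0 lam alpha)"
proof -
  have "MLQ0 lam alpha \<subseteq> {xs. set xs \<subseteq> Pow {1..length alpha} \<and> length xs = first_part lam}"
  proof
    fix B assume "B \<in> MLQ0 lam alpha"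
    then have "length B = first_part lam" "allrows (length alpha) B" unfolding MLQ0_iff by auto
    then show "B \<in> {xs. set xs \<subseteq> Pow {1..length alpha} \<and> length xs = first_part lam}"
      unfolding allrows_def by auto
  qed
  moreover have "finite {xs. set xs \<subseteq> Pow {1..length alpha} \<and> length xs = first_part lam}"
    by (rule finite_lists_length_eq) simp
  ultimately show ?thesis by (rule finite_subset)
qed

theorem proposition5p14:
  fixes lam alpha :: "nat list"
  assumes "is_partition lam"
  shows "bij_betw (rho_up (length alpha)) (MLQ0 lam alpha) (MLQ0 lam (rev alpha))"
proof -
  let ?f = "rho_up (length alpha)"
  let ?S = "MLQ0 lam alpha"
  let ?T = "MLQ0 lam (rev alpha)"
  have sub: "?f ` ?S \<subseteq> ?T" using key by blast
  have inj: "inj_on ?f ?S" by (rule key_inj)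
  have sub2: "?f ` ?T \<subseteq> ?S" using key[of _ lam "rev alpha"] by auto
  have inj2: "inj_on ?f ?T" using key_inj[of "rev alpha" lam] by simp
  have c1: "card ?S \<le> card ?T"
    using card_inj_on_le[OF inj sub MLQ0_finite] .
  have c2: "card ?T \<le> card ?S"
    using card_inj_on_le[OF inj2 sub2 MLQ0_finite] .
  have "card (?f ` ?S) = card ?T" using card_image[OF inj] c1 c2 by simp
  then have "?f ` ?S = ?T" using sub MLQ0_finite by (intro card_subset_eq) auto
  then show ?thesis using inj unfolding bij_betw_def by simp
qed

end
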